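(* Let $U\subset\mathbb{C}$ be simply connected and let $F,G$ be holomorphic on $U$ with $F$ nowhere zero. Put $\phi=(F,\mathrm{i}F,-FG)$, and for $\theta\in\mathbb{R}$ let $$\mathbf{x}_\theta(z)=\cos\theta\,\mathrm{Re}\int_{z_0}^z\phi\,\mathrm{d}w+\sin\theta\,\mathrm{Im}\int_{z_0}^z\phi\,\mathrm{d}w=\mathrm{Re}\int_{z_0}^z\mathrm{e}^{-\mathrm{i}\theta}\phi\,\mathrm{d}w.$$ Then: (i) All $\mathbf{x}_\theta$ have the same first fundamental form $|F|^2|\mathrm{d}z|^2$. (ii) At a point $z$, the direction $\mathbf{v}=v_1\partial_u+v_2\partial_v$ is asymptotic for $\mathbf{x}_\theta$ if and only if $\mathrm{e}^{-\mathrm{i}\theta}F(z)G'(z)(v_1+\mathrm{i}v_2)^2\in\mathrm{i}\mathbb{R}$. (iii) At a point $z$ where $F(z)G'(z)\neq0$, the direction $\mathbf{v}$ is a principal direction of $\mathbf{x}_\theta$ if and only if $\mathrm{e}^{-\mathrm{i}\theta}F(z)G'(z)(v_1+\mathrm{i}v_2)^2\in\mathbb{R}$. (iv) Consequently, at such points, asymptotic directions of $\mathbf{x}_\theta$ are principal directions of the conjugate surface $\mathbf{x}_{\theta+\pi/2}$, and principal directions of $\mathbf{x}_\theta$ are asymptotic directions of $\mathbf{x}_{\theta+\pi/2}$.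
   Context: $\mathbb{I}^3$ is $\mathbb{R}^3$ with the degenerate metric $\langle a,b\rangle=a^1b^1+a^2b^2$, and $z=u+\mathrm{i}v$. The first fundamental form has coefficients $g_{ij}=\langle\mathbf{x}_i,\mathbf{x}_j\rangle$. The minimal normal $\mathbf{N}_m$ is the unique vector $(a,b,1)$ that is Euclidean-orthogonal to $\mathbf{x}_u,\mathbf{x}_v$, and the second fundamental form has coefficients $h_{ij}=\mathbf{x}_{ij}\cdot\mathbf{N}_m$. A direction $\mathbf{v}$ is asymptotic if $\mathrm{II}(\mathbf{v},\mathbf{v})=0$. It is principal if it is an eigenvector of the shape operator $g^{-1}h$, i.e. a critical direction of $\mathrm{II}(\mathbf{v},\mathbf{v})/\mathrm{I}(\mathbf{v},\mathbf{v})$. The surface $\mathbf{x}_{\theta+\pi/2}$ is called the conjugate of $\mathbf{x}_\theta$. *)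

theory Defs
  imports "HOL-Analysis.Analysis"
begin

text \<open>Surfaces in isotropic 3-space are maps X :: complex => real^3, parametrised by z = u + i v.\<close>

definition iso_ip :: "real^3 \<Rightarrow> real^3 \<Rightarrow> real" where
  "iso_ip a b = a$1 * b$1 + a$2 * b$2"

definition pu :: "(complex \<Rightarrow> real^3) \<Rightarrow> complex \<Rightarrow> real^3" where
  "pu X z = vector_derivative (\<lambda>t::real. X (z + of_real t)) (at 0)"

definition pv :: "(complex \<Rightarrow> real^3) \<Rightarrow> complex \<Rightarrow> real^3" where
  "pv X z = vector_derivative (\<lambda>t::real. X (z + \<i> * of_real t)) (at 0)"

definition gmat :: "(complex \<Rightarrow> real^3) \<Rightarrow> complex \<Rightarrow> real^2^2" where
  "gmat X z = vector [vector [iso_ip (pu X z) (pu X z), iso_ip (pu X z) (pv X z)],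
                      vector [iso_ip (pv X z) (pu X z), iso_ip (pv X z) (pv X z)]]"

definition min_normal :: "(complex \<Rightarrow> real^3) \<Rightarrow> complex \<Rightarrow> real^3" where
  "min_normal X z = (THE N. N$3 = 1 \<and> N \<bullet> pu X z = 0 \<and> N \<bullet> pv X z = 0)"

definition hmat :: "(complex \<Rightarrow> real^3) \<Rightarrow> complex \<Rightarrow> real^2^2" where
  "hmat X z = vector [vector [pu (pu X) z \<bullet> min_normal X z, pv (pu X) z \<bullet> min_normal X z],
                      vector [pu (pv X) z \<bullet> min_normal X z, pv (pv X) z \<bullet> min_normal X z]]"

definition shape_op :: "(complex \<Rightarrow> real^3) \<Rightarrow> complex \<Rightarrow> real^2^2" where
  "shape_op X z = matrix_inv (gmat X z) ** hmat X z"

definition second_ff :: "(complex \<Rightarrow> real^3) \<Rightarrow> complex \<Rightarrow> real^2 \<Rightarrow> real" where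
  "second_ff X z v = v \<bullet> (hmat X z *v v)"

definition asymptotic_dir :: "(complex \<Rightarrow> real^3) \<Rightarrow> complex \<Rightarrow> real^2 \<Rightarrow> bool" where
  "asymptotic_dir X z v \<longleftrightarrow> second_ff X z v = 0"

definition principal_dir :: "(complex \<Rightarrow> real^3) \<Rightarrow> complex \<Rightarrow> real^2 \<Rightarrow> bool" where
  "principal_dir X z v \<longleftrightarrow> v \<noteq> 0 \<and> (\<exists>c::real. shape_op X z *v v = c *\<^sub>R v)"

text \<open>x_theta(z) = Re(e^{-i theta} Phi(z)), with Phi = (P1,P2,P3) = integral of phi from z0.\<close>
definition surf :: "(complex \<Rightarrow> complex) \<Rightarrow> (complex \<Rightarrow> complex) \<Rightarrow> (complex \<Rightarrow> complex)
                     \<Rightarrow> real \<Rightarrow> complex \<Rightarrow> real^3" where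
  "surf P1 P2 P3 \<theta> z = vector [Re (exp (- \<i> * of_real \<theta>) * P1 z),
                                Re (exp (- \<i> * of_real \<theta>) * P2 z),
                                Re (exp (- \<i> * of_real \<theta>) * P3 z)]"

end

theory Submission
  imports Defs
begin

lemma vec3_eq: "(vector [a, b, c] :: real^3) = a *\<^sub>R axis 1 1 + b *\<^sub>R axis 2 1 + c *\<^sub>R axis 3 1"
  by (simp add: vec_eq_iff forall_3 axis_def)

lemma vec3_deriv:
  assumes "(f1 has_vector_derivative d1) (at t)" "(f2 has_vector_derivative d2) (at t)"
    "(f3 has_vector_derivative d3) (at t)"
  shows "((\<lambda>t. vector [f1 t, f2 t, f3 t] :: real^3) has_vector_derivative vector [d1, d2, d3]) (at t)"
  unfolding vec3_eq
  using assms
  by (intro derivative_eq_intros) (auto simp: has_real_derivative_iff_has_vector_derivative)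

lemma Re_line_deriv:
  assumes "(Q has_field_derivative d) (at z)"
  shows "((\<lambda>t::real. Re (Q (z + of_real t * w))) has_vector_derivative Re (w * d)) (at 0)"
proof -
  have l: "((\<lambda>t::real. z + of_real t * w) has_vector_derivative w) (at 0)"
    by (auto intro!: derivative_eq_intros simp: scaleR_conv_of_real)
  have "((Q \<circ> (\<lambda>t::real. z + of_real t * w)) has_vector_derivative w * d) (at 0)"
    by (rule field_vector_diff_chain_at[OF l]) (simp add: assms)
  from bounded_linear.has_vector_derivative[OF bounded_linear_Re this]
  show ?thesis by (simp add: o_def)
qed

lemma dir_deriv:
  assumes "(Q1 has_field_derivative d1) (at z)" "(Q2 has_field_derivative d2) (at z)"
    "(Q3 has_field_derivative d3) (at z)"
  shows "vector_derivative (\<lambda>t::real. (\<lambda>y. vector [Re (Q1 y), Re (Q2 y), Re (Q3 y)] :: real^3) (z + of_real t * w)) (at 0)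
     = vector [Re (w * d1), Re (w * d2), Re (w * d3)]"
  apply (rule vector_derivative_at)
  using vec3_deriv[OF Re_line_deriv[OF assms(1)] Re_line_deriv[OF assms(2)] Re_line_deriv[OF assms(3)]]
  by simp

lemma pu_eq:
  assumes "(Q1 has_field_derivative d1) (at z)" "(Q2 has_field_derivative d2) (at z)"
    "(Q3 has_field_derivative d3) (at z)"
  shows "pu (\<lambda>y. vector [Re (Q1 y), Re (Q2 y), Re (Q3 y)]) z = vector [Re d1, Re d2, Re d3]"
  using dir_deriv[OF assms, of 1] by (simp add: pu_def)

lemma pv_eq:
  assumes "(Q1 has_field_derivative d1) (at z)" "(Q2 has_field_derivative d2) (at z)"
    "(Q3 has_field_derivative d3) (at z)"
  shows "pv (\<lambda>y. vector [Re (Q1 y), Re (Q2 y), Re (Q3 y)]) z = vector [Re (\<i>*d1), Re (\<i>*d2), Re (\<i>*d3)]"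
  using dir_deriv[OF assms, of \<i>] by (simp add: pv_def mult.commute)

lemma line_local:
  fixes z w :: complex and X Y :: "complex \<Rightarrow> 'b::real_normed_vector"
  assumes "open U" "z \<in> U" "\<forall>y\<in>U. X y = Y y"
  shows "vector_derivative (\<lambda>t::real. X (z + of_real t * w)) (at 0)
       = vector_derivative (\<lambda>t::real. Y (z + of_real t * w)) (at 0)"
proof -
  have "open ((\<lambda>t::real. z + of_real t * w) -` U)"
    by (rule continuous_open_vimage) (auto intro!: continuous_intros continuous_at_imp_continuous_on simp: assms)
  then have "eventually (\<lambda>t. z + of_real t * w \<in> U) (nhds (0::real))"
    using assms unfolding eventually_nhds by (intro exI[of _ "(\<lambda>t::real. z + of_real t * w) -` U"]) auto
  then have "eventually (\<lambda>t. t \<in> UNIV \<longrightarrow> X (z + of_real t * w) = Y (z + of_real t * w)) (nhds (0::real))"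
    by (rule eventually_mono) (use assms in auto)
  then show ?thesis
    by (intro vector_derivative_cong_eq) auto
qed

lemma pu_local: "open U \<Longrightarrow> z \<in> U \<Longrightarrow> \<forall>y\<in>U. X y = Y y \<Longrightarrow> pu X z = pu Y z"
  using line_local[of U z X Y 1] by (simp add: pu_def)

lemma pv_local: "open U \<Longrightarrow> z \<in> U \<Longrightarrow> \<forall>y\<in>U. X y = Y y \<Longrightarrow> pv X z = pv Y z"
  using line_local[of U z X Y \<i>] by (simp add: pv_def mult.commute)

lemma mv2: "(vector[vector[a,b],vector[c,d]] :: real^2^2) *v v = vector[a * v$1 + b * v$2, c * v$1 + d * v$2]"
  by (simp add: vec_eq_iff forall_2 matrix_vector_mult_def sum_2)

lemma mm2: "(vector[vector[a,b],vector[c,d]] :: real^2^2) ** vector[vector[a',b'],vector[c',d']]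
   = (vector[vector[a*a'+b*c', a*b'+b*d'], vector[c*a'+d*c', c*b'+d*d']] :: real^2^2)"
  unfolding vec_eq_iff forall_2 by (simp add: matrix_matrix_mult_def sum_2 forall_2)

lemma mat1_2: "(mat 1 :: real^2^2) = vector[vector[1,0],vector[0,1]]"
  by (simp add: vec_eq_iff forall_2 mat_def)

lemma inv_diag:
  assumes "k \<noteq> (0::real)"
  shows "matrix_inv (vector[vector[k,0],vector[0,k]] :: real^2^2) = vector[vector[1/k,0],vector[0,1/k]]"
proof -
  let ?g = "vector[vector[k,0],vector[0,k]] :: real^2^2"
  let ?B = "vector[vector[1/k,0],vector[0,1/k]] :: real^2^2"
  have gB: "?g ** ?B = mat 1" "?B ** ?g = mat 1" using assms by (simp_all add: mm2 mat1_2)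
  then have "\<exists>A'. ?g ** A' = mat 1 \<and> A' ** ?g = mat 1" by blast
  then have "?g ** matrix_inv ?g = mat 1 \<and> matrix_inv ?g ** ?g = mat 1"
    unfolding matrix_inv_def by (rule someI_ex)
  then have "matrix_inv ?g = matrix_inv ?g ** (?g ** ?B)" "matrix_inv ?g ** ?g = mat 1"
    using gB by (simp_all add: matrix_mul_rid)
  then show ?thesis by (simp add: matrix_mul_assoc matrix_mul_lid)
qed

lemma normal_alg:
  fixes w g :: complex and n1 n2 :: real
  assumes "w \<noteq> 0"
    and "n1 * Re w + n2 * Re (\<i>*w) + Re (-(w*g)) = 0"
    and "n1 * Re (\<i>*w) + n2 * Re (\<i>*(\<i>*w)) + Re (\<i>*(-(w*g))) = 0"
  shows "n1 = Re g \<and> n2 = Im g"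
proof -
  have e1: "(n1 - Re g) * Re w - (n2 - Im g) * Im w = 0" using assms(2) by (simp add: algebra_simps)
  have e2: "(n1 - Re g) * Im w + (n2 - Im g) * Re w = 0" using assms(3) by (simp add: algebra_simps)
  have s: "(Re w)\<^sup>2 + (Im w)\<^sup>2 \<noteq> 0" using assms(1)
    by (metis complex_eq_0)
  have "(n1 - Re g) * ((Re w)\<^sup>2 + (Im w)\<^sup>2) = Re w * ((n1 - Re g) * Re w - (n2 - Im g) * Im w)
      + Im w * ((n1 - Re g) * Im w + (n2 - Im g) * Re w)"
    by (simp add: algebra_simps power2_eq_square)
  then have "(n1 - Re g) * ((Re w)\<^sup>2 + (Im w)\<^sup>2) = 0" using e1 e2 by simp
  moreover have "(n2 - Im g) * ((Re w)\<^sup>2 + (Im w)\<^sup>2) = - Im w * ((n1 - Re g) * Re w - (n2 - Im g) * Im w)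
      + Re w * ((n1 - Re g) * Im w + (n2 - Im g) * Re w)"
    by (simp add: algebra_simps power2_eq_square)
  then have "(n2 - Im g) * ((Re w)\<^sup>2 + (Im w)\<^sup>2) = 0" using e1 e2 by simp
  ultimately show ?thesis using s by auto
qed

lemma h_alg:
  fixes q p w g g' :: complex
  shows "vector [Re g, Im g, 1] \<bullet> (vector [Re (q*p), Re (q*(\<i>*p)), Re (q*(-(p*g + w*g')))] :: real^3)
    = - Re (q * (w * g'))"
  by (simp add: inner_vec_def sum_3 algebra_simps)

lemma key:
  fixes U :: "complex set" and F G P1 P2 P3 :: "complex \<Rightarrow> complex" and z :: complex
  assumes U: "open U" and hF: "F holomorphic_on U" and hG: "G holomorphic_on U"
    and nz: "\<forall>z\<in>U. F z \<noteq> 0"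
    and d1: "\<forall>z\<in>U. (P1 has_field_derivative F z) (at z)"
    and d2: "\<forall>z\<in>U. (P2 has_field_derivative \<i> * F z) (at z)"
    and d3: "\<forall>z\<in>U. (P3 has_field_derivative - (F z * G z)) (at z)"
    and z: "z \<in> U"
  shows "gmat (surf P1 P2 P3 \<theta>) z = vector [vector [(cmod (F z))\<^sup>2, 0], vector [0, (cmod (F z))\<^sup>2]]"
    and "hmat (surf P1 P2 P3 \<theta>) z = vector [vector [- Re (exp (- \<i> * of_real \<theta>) * F z * deriv G z), Im (exp (- \<i> * of_real \<theta>) * F z * deriv G z)],
                 vector [Im (exp (- \<i> * of_real \<theta>) * F z * deriv G z), Re (exp (- \<i> * of_real \<theta>) * F z * deriv G z)]]"
proof -
  define c where "c = exp (- \<i> * of_real \<theta>)"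
  define X where "X = surf P1 P2 P3 \<theta>"
  have c1: "cmod c = 1" unfolding c_def by (simp add: norm_exp_eq_Re)
  have Xe: "X = (\<lambda>y. vector [Re (c * P1 y), Re (c * P2 y), Re (c * P3 y)])"
    unfolding X_def c_def by (simp add: surf_def fun_eq_iff)
  have dF: "(F has_field_derivative deriv F y) (at y)" if "y \<in> U" for y
    using hF U that by (rule holomorphic_derivI)
  have dG: "(G has_field_derivative deriv G y) (at y)" if "y \<in> U" for y
    using hG U that by (rule holomorphic_derivI)
  define Y where "Y = (\<lambda>q y. vector [Re (q * (c * F y)), Re (q * (c * (\<i> * F y))), Re (q * (c * (- (F y * G y))))] :: real^3)"
  have puX: "pu X y = Y 1 y" if "y \<in> U" for y
    unfolding Xe Y_def
    by (rule pu_eq[THEN trans]) (auto intro!: DERIV_cmult d1[rule_format] d2[rule_format] d3[rule_format] that)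
  have pvX: "pv X y = Y \<i> y" if "y \<in> U" for y
    unfolding Xe Y_def
    by (rule pv_eq[THEN trans]) (auto intro!: DERIV_cmult d1[rule_format] d2[rule_format] d3[rule_format] that)
  have puY: "pu (Y q) z = vector [Re (q * (c * deriv F z)), Re (q * (\<i> * (c * deriv F z))),
       Re (q * (- ((c * deriv F z) * G z + (c * F z) * deriv G z)))]" for q
    unfolding Y_def
    by (rule pu_eq[THEN trans]) (auto intro!: derivative_eq_intros dF dG z simp: algebra_simps)
  have pvY: "pv (Y q) z = vector [Re ((\<i> * q) * (c * deriv F z)), Re ((\<i> * q) * (\<i> * (c * deriv F z))),
       Re ((\<i> * q) * (- ((c * deriv F z) * G z + (c * F z) * deriv G z)))]" for q
    unfolding Y_def
    by (rule pv_eq[THEN trans]) (auto intro!: derivative_eq_intros dF dG z simp: algebra_simps)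
  have puu: "pu (pu X) z = pu (Y 1) z" by (rule pu_local[OF U z]) (simp add: puX)
  have pvu: "pv (pu X) z = pv (Y 1) z" by (rule pv_local[OF U z]) (simp add: puX)
  have puv: "pu (pv X) z = pu (Y \<i>) z" by (rule pu_local[OF U z]) (simp add: pvX)
  have pvv: "pv (pv X) z = pv (Y \<i>) z" by (rule pv_local[OF U z]) (simp add: pvX)
  define w where "w = c * F z"
  have w0: "w \<noteq> 0" using nz z c1 unfolding w_def by auto
  have puXz: "pu X z = vector [Re w, Re (\<i> * w), Re (- (w * G z))]"
    using puX[OF z] by (simp add: Y_def w_def algebra_simps)
  have pvXz: "pv X z = vector [Re (\<i> * w), Re (\<i> * (\<i> * w)), Re (\<i> * (- (w * G z)))]"
    using pvX[OF z] by (simp add: Y_def w_def algebra_simps)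
  have N: "min_normal X z = vector [Re (G z), Im (G z), 1]"
    unfolding min_normal_def
  proof (rule the_equality)
    show "(vector [Re (G z), Im (G z), 1] :: real^3) $ 3 = 1 \<and> vector [Re (G z), Im (G z), 1] \<bullet> pu X z = 0 \<and>
      vector [Re (G z), Im (G z), 1] \<bullet> pv X z = 0"
      unfolding puXz pvXz by (simp add: inner_vec_def sum_3 algebra_simps)
  next
    fix N :: "real^3"
    assume a: "N $ 3 = 1 \<and> N \<bullet> pu X z = 0 \<and> N \<bullet> pv X z = 0"
    then have "N$1 * Re w + N$2 * Re (\<i>*w) + Re (-(w*G z)) = 0"
      "N$1 * Re (\<i>*w) + N$2 * Re (\<i>*(\<i>*w)) + Re (\<i>*(-(w*G z))) = 0"
      unfolding puXz pvXz by (auto simp add: inner_vec_def sum_3)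
    from normal_alg[OF w0 this] a show "N = vector [Re (G z), Im (G z), 1]"
      by (simp add: vec_eq_iff forall_3)
  qed
  have g: "Re w ^ 2 + Re (\<i> * w) ^ 2 = (cmod (F z))\<^sup>2"
  proof -
    have "Re w ^ 2 + Re (\<i> * w) ^ 2 = (cmod w)\<^sup>2" by (simp add: cmod_power2)
    moreover have "cmod w = cmod (F z)" by (simp add: w_def norm_mult c1)
    ultimately show ?thesis by simp
  qed
  show "gmat (surf P1 P2 P3 \<theta>) z = vector [vector [(cmod (F z))\<^sup>2, 0], vector [0, (cmod (F z))\<^sup>2]]"
    unfolding X_def[symmetric] gmat_def puXz pvXz using g
    by (simp add: iso_ip_def power2_eq_square algebra_simps)
  show "hmat (surf P1 P2 P3 \<theta>) z = vector [vector [- Re (exp (- \<i> * of_real \<theta>) * F z * deriv G z), Im (exp (- \<i> * of_real \<theta>) * F z * deriv G z)],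
                 vector [Im (exp (- \<i> * of_real \<theta>) * F z * deriv G z), Re (exp (- \<i> * of_real \<theta>) * F z * deriv G z)]]"
    unfolding X_def[symmetric] c_def[symmetric] hmat_def puu pvu puv pvv puY pvY N
    unfolding vec_eq_iff forall_2
    by (simp add: inner_vec_def sum_3 algebra_simps forall_2)
qed

lemma exp_shift: "exp (- \<i> * of_real (t + pi/2)) = - \<i> * exp (- \<i> * of_real t)"
proof -
  have e: "exp (- \<i> * of_real x) = cis (-x)" for x by (simp add: cis_conv_exp)
  have "cis (-(t + pi/2)) = cis (-t + -(pi/2))" by simp
  also have "\<dots> = cis (-t) * cis (-(pi/2))" by (rule cis_mult[symmetric])
  also have "\<dots> = - \<i> * cis (-t)" by simp
  finally show ?thesis unfolding e .
qed

lemma sff: "v \<bullet> ((vector [vector [- Re A, Im A], vector [Im A, Re A]] :: real^2^2) *v v)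
   = - Re (A * (Complex (v$1) (v$2))\<^sup>2)"
  by (simp add: mv2 inner_vec_def sum_2 power2_eq_square algebra_simps)

lemma eig2:
  fixes a1 a2 p q :: real
  assumes "p \<noteq> 0 \<or> q \<noteq> 0"
  shows "(\<exists>\<mu>. -a1*p + a2*q = \<mu>*p \<and> a2*p + a1*q = \<mu>*q) \<longleftrightarrow> a2*(p^2-q^2) + 2*a1*p*q = 0"
proof
  assume "\<exists>\<mu>. -a1*p + a2*q = \<mu>*p \<and> a2*p + a1*q = \<mu>*q"
  then obtain \<mu> where e: "-a1*p + a2*q = \<mu>*p" "a2*p + a1*q = \<mu>*q" by blast
  have "a2*(p^2-q^2) + 2*a1*p*q = p * (a2*p + a1*q) - q * (-a1*p + a2*q)"
    by (simp add: algebra_simps power2_eq_square)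
  also have "\<dots> = 0" unfolding e by (simp add: algebra_simps)
  finally show "a2*(p^2-q^2) + 2*a1*p*q = 0" .
next
  assume h: "a2*(p^2-q^2) + 2*a1*p*q = 0"
  show "\<exists>\<mu>. -a1*p + a2*q = \<mu>*p \<and> a2*p + a1*q = \<mu>*q"
  proof (cases "p = 0")
    case True
    with assms have "q \<noteq> 0" by simp
    with h True have "a2 = 0" by (simp add: power2_eq_square)
    with True show ?thesis by (intro exI[of _ a1]) simp
  next
    case False
    have "(a2*p + a1*q) * p = (-a1*p + a2*q) * q"
      using h by (simp add: algebra_simps power2_eq_square)
    then have "a2*p + a1*q = ((-a1*p + a2*q)/p) * q"
      using False by (simp add: field_simps)
    then show ?thesis using False by (intro exI[of _ "(-a1*p + a2*q)/p"]) simp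
  qed
qed

lemma princ_alg:
  fixes k :: real and v :: "real^2" and A :: complex
  assumes "k \<noteq> 0" "v \<noteq> 0"
  shows "(\<exists>c::real. (vector [vector [1/k, 0], vector [0, 1/k]] :: real^2^2) *v
           ((vector [vector [- Re A, Im A], vector [Im A, Re A]] :: real^2^2) *v v) = c *\<^sub>R v)
       \<longleftrightarrow> A * (Complex (v$1) (v$2))\<^sup>2 \<in> \<real>"
proof -
  have v: "v$1 \<noteq> 0 \<or> v$2 \<noteq> 0" using assms(2) by (auto simp: vec_eq_iff forall_2)
  have "(\<exists>c::real. (vector [vector [1/k, 0], vector [0, 1/k]] :: real^2^2) *v
           ((vector [vector [- Re A, Im A], vector [Im A, Re A]] :: real^2^2) *v v) = c *\<^sub>R v)
     \<longleftrightarrow> (\<exists>c. (- Re A * v$1 + Im A * v$2) / k = c * v$1 \<and> (Im A * v$1 + Re A * v$2) / k = c * v$2)"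
    by (simp add: mv2 vec_eq_iff forall_2)
  also have "\<dots> \<longleftrightarrow> (\<exists>\<mu>. - Re A * v$1 + Im A * v$2 = \<mu> * v$1 \<and> Im A * v$1 + Re A * v$2 = \<mu> * v$2)"
  proof
    assume "\<exists>c. (- Re A * v$1 + Im A * v$2) / k = c * v$1 \<and> (Im A * v$1 + Re A * v$2) / k = c * v$2"
    then obtain c where "(- Re A * v$1 + Im A * v$2) / k = c * v$1" "(Im A * v$1 + Re A * v$2) / k = c * v$2" by blast
    then show "\<exists>\<mu>. - Re A * v$1 + Im A * v$2 = \<mu> * v$1 \<and> Im A * v$1 + Re A * v$2 = \<mu> * v$2"
      using assms(1) by (intro exI[of _ "c*k"]) (simp add: field_simps)
  next
    assume "\<exists>\<mu>. - Re A * v$1 + Im A * v$2 = \<mu> * v$1 \<and> Im A * v$1 + Re A * v$2 = \<mu> * v$2"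
    then obtain m where "- Re A * v$1 + Im A * v$2 = m * v$1" "Im A * v$1 + Re A * v$2 = m * v$2" by blast
    then show "\<exists>c. (- Re A * v$1 + Im A * v$2) / k = c * v$1 \<and> (Im A * v$1 + Re A * v$2) / k = c * v$2"
      using assms(1) by (intro exI[of _ "m/k"]) (simp add: field_simps)
  qed
  also have "\<dots> \<longleftrightarrow> Im A * ((v$1)^2 - (v$2)^2) + 2 * Re A * v$1 * v$2 = 0"
    using eig2[OF v] by simp
  also have "\<dots> \<longleftrightarrow> A * (Complex (v$1) (v$2))\<^sup>2 \<in> \<real>"
    by (simp add: complex_is_Real_iff power2_eq_square algebra_simps)
  finally show ?thesis .
qed

theorem mainTheorem9:
  fixes U :: "complex set" and F G P1 P2 P3 :: "complex \<Rightarrow> complex" and z0 :: complex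
  assumes "open U" and "simply_connected U"
    and "F holomorphic_on U" and "G holomorphic_on U"
    and "\<forall>z\<in>U. F z \<noteq> 0"
    and "z0 \<in> U"
    and "\<forall>z\<in>U. (P1 has_field_derivative F z) (at z)"
    and "\<forall>z\<in>U. (P2 has_field_derivative \<i> * F z) (at z)"
    and "\<forall>z\<in>U. (P3 has_field_derivative - (F z * G z)) (at z)"
    and "P1 z0 = 0" and "P2 z0 = 0" and "P3 z0 = 0"
  shows
    "(\<forall>\<theta> z. z \<in> U \<longrightarrow>
        gmat (surf P1 P2 P3 \<theta>) z = vector [vector [(cmod (F z))\<^sup>2, 0], vector [0, (cmod (F z))\<^sup>2]])
   \<and> (\<forall>\<theta> z (v::real^2). z \<in> U \<and> v \<noteq> 0 \<longrightarrow>
        (asymptotic_dir (surf P1 P2 P3 \<theta>) z v \<longleftrightarrow>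
         Re (exp (- \<i> * of_real \<theta>) * F z * deriv G z * (Complex (v$1) (v$2))\<^sup>2) = 0))
   \<and> (\<forall>\<theta> z (v::real^2). z \<in> U \<and> F z * deriv G z \<noteq> 0 \<and> v \<noteq> 0 \<longrightarrow>
        (principal_dir (surf P1 P2 P3 \<theta>) z v \<longleftrightarrow>
         exp (- \<i> * of_real \<theta>) * F z * deriv G z * (Complex (v$1) (v$2))\<^sup>2 \<in> \<real>))
   \<and> (\<forall>\<theta> z (v::real^2). z \<in> U \<and> F z * deriv G z \<noteq> 0 \<and> v \<noteq> 0 \<longrightarrow>
        (asymptotic_dir (surf P1 P2 P3 \<theta>) z v \<longrightarrow> principal_dir (surf P1 P2 P3 (\<theta> + pi/2)) z v)
      \<and> (principal_dir (surf P1 P2 P3 \<theta>) z v \<longrightarrow> asymptotic_dir (surf P1 P2 P3 (\<theta> + pi/2)) z v))"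
proof -
  note A = assms
  have K: "gmat (surf P1 P2 P3 \<theta>) z = vector [vector [(cmod (F z))\<^sup>2, 0], vector [0, (cmod (F z))\<^sup>2]]"
    "hmat (surf P1 P2 P3 \<theta>) z = vector [vector [- Re (exp (- \<i> * of_real \<theta>) * F z * deriv G z), Im (exp (- \<i> * of_real \<theta>) * F z * deriv G z)],
                 vector [Im (exp (- \<i> * of_real \<theta>) * F z * deriv G z), Re (exp (- \<i> * of_real \<theta>) * F z * deriv G z)]]"
    if "z \<in> U" for \<theta> z
    using key[OF A(1,3,4,5,7,8,9) that] by blast+
  have asym: "asymptotic_dir (surf P1 P2 P3 \<theta>) z v \<longleftrightarrow>
         Re (exp (- \<i> * of_real \<theta>) * F z * deriv G z * (Complex (v$1) (v$2))\<^sup>2) = 0"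
    if "z \<in> U" for \<theta> z v
    unfolding asymptotic_dir_def second_ff_def K(2)[OF that] sff by (simp only: neg_equal_0_iff_equal)
  have princ: "principal_dir (surf P1 P2 P3 \<theta>) z v \<longleftrightarrow>
         exp (- \<i> * of_real \<theta>) * F z * deriv G z * (Complex (v$1) (v$2))\<^sup>2 \<in> \<real>"
    if "z \<in> U" "v \<noteq> 0" for \<theta> z v
  proof -
    have k: "(cmod (F z))\<^sup>2 \<noteq> 0" using A(5) that(1) by simp
    show ?thesis
      unfolding principal_dir_def shape_op_def K[OF that(1)] inv_diag[OF k]
        matrix_vector_mul_assoc[symmetric]
      by (subst princ_alg[OF k that(2), symmetric]) (simp only: that(2) simp_thms not_False_eq_True)
  qed
  have im: "Re x = 0 \<longleftrightarrow> (- \<i> * x) \<in> \<real>" for x :: complex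
    by (simp add: complex_is_Real_iff)
  have re: "x \<in> \<real> \<longleftrightarrow> Re (- \<i> * x) = 0" for x :: complex
    by (simp add: complex_is_Real_iff)
  have iv: "(asymptotic_dir (surf P1 P2 P3 \<theta>) z v \<longrightarrow> principal_dir (surf P1 P2 P3 (\<theta> + pi/2)) z v)
      \<and> (principal_dir (surf P1 P2 P3 \<theta>) z v \<longrightarrow> asymptotic_dir (surf P1 P2 P3 (\<theta> + pi/2)) z v)"
    if "z \<in> U" "v \<noteq> 0" for \<theta> z v
  proof -
    define x where "x = exp (- \<i> * of_real \<theta>) * F z * deriv G z * (Complex (v$1) (v$2))\<^sup>2"
    have x': "exp (- \<i> * of_real (\<theta> + pi/2)) * F z * deriv G z * (Complex (v$1) (v$2))\<^sup>2 = - \<i> * x"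
      unfolding exp_shift x_def by (simp only: mult.assoc)
    show ?thesis
      unfolding asym[OF that(1)] princ[OF that] x' x_def[symmetric] im[symmetric] re[symmetric]
      by blast
  qed
  show ?thesis
  proof (intro conjI allI impI)
    fix \<theta> z assume "z \<in> U" then show "gmat (surf P1 P2 P3 \<theta>) z = vector [vector [(cmod (F z))\<^sup>2, 0], vector [0, (cmod (F z))\<^sup>2]]"
      by (rule K(1))
  next
    fix \<theta> z and v :: "real^2" assume h: "z \<in> U \<and> v \<noteq> 0"
    then show "asymptotic_dir (surf P1 P2 P3 \<theta>) z v \<longleftrightarrow>
         Re (exp (- \<i> * of_real \<theta>) * F z * deriv G z * (Complex (v$1) (v$2))\<^sup>2) = 0"
      using asym by blast
  next
    fix \<theta> z and v :: "real^2" assume h: "z \<in> U \<and> F z * deriv G z \<noteq> 0 \<and> v \<noteq> 0"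
    then show "principal_dir (surf P1 P2 P3 \<theta>) z v \<longleftrightarrow>
         exp (- \<i> * of_real \<theta>) * F z * deriv G z * (Complex (v$1) (v$2))\<^sup>2 \<in> \<real>"
      using princ by blast
  next
    fix \<theta> z and v :: "real^2" assume h: "z \<in> U \<and> F z * deriv G z \<noteq> 0 \<and> v \<noteq> 0"
      "asymptotic_dir (surf P1 P2 P3 \<theta>) z v"
    then show "principal_dir (surf P1 P2 P3 (\<theta> + pi/2)) z v" using iv by blast
  next
    fix \<theta> z and v :: "real^2" assume h: "z \<in> U \<and> F z * deriv G z \<noteq> 0 \<and> v \<noteq> 0"
      "principal_dir (surf P1 P2 P3 \<theta>) z v"
    then show "asymptotic_dir (surf P1 P2 P3 (\<theta> + pi/2)) z v" using iv by blast
  qed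
qed

end
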